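(* Let $\Omega\subset\mathbb{R}^2$ be a domain with coordinates $(x,y)$ and let $r:\Omega\to S^5\subset\mathbb{C}^3$ be a smooth map such that $\psi=\mathcal{H}\circ r:\Omega\to\mathbb{C}P^2$ is a conformal Lagrangian immersion and $$\langle r,r_x\rangle=\langle r,r_y\rangle=\langle r_x,r_y\rangle=0,\qquad |r_x|=|r_y|=e^{v},$$ so that $e^{2v(x,y)}(dx^2+dy^2)$ is the induced metric. Let $\beta:\Omega\to\mathbb{R}$ be a smooth function (the Lagrangian angle) such that the matrix with rows $e^{i\beta}r,\ e^{-v}r_x,\ e^{-v}r_y$ lies in $\mathrm{SU}(3)$. Define real functions $f,g$ by $$if=\langle \partial_x(e^{-v}r_y),e^{-v}r_y\rangle,\qquad ig=\langle\partial_y(e^{-v}r_x),e^{-v}r_x\rangle,$$ and set $U=fe^{2v}$, $V=ge^{2v}$. Then $$U_y+V_x+e^{2v}\beta_{xy}=0,$$ $$V_y+v_ye^{2v}\beta_y=U_x+v_xe^{2v}\beta_x,$$ $$\Delta v+e^{2v}-2(U^2+V^2)e^{-4v}-(\beta_xU+\beta_yV)e^{-2v}=0,$$ where $\Delta=\partial_x^2+\partial_y^2$.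
   Context: $S^5$ is the unit sphere in $\mathbb{C}^3$, $\mathcal{H}:S^5\to\mathbb{C}P^2$ is the Hopf fibration, and $\langle u,w\rangle=\sum_{j=1}^3u_j\bar w_j$ is the standard Hermitian product on $\mathbb{C}^3$, $|u|^2=\langle u,u\rangle$. An immersion into $\mathbb{C}P^2$ is Lagrangian if the pullback of the Fubini–Study form vanishes, and conformal if its induced metric is a multiple of $dx^2+dy^2$; the stated orthogonality relations hold for a horizontal lift $r$ of such an immersion. *)

theory Defs
  imports "HOL-Analysis.Analysis"
begin

definition herm :: "complex^3 \<Rightarrow> complex^3 \<Rightarrow> complex" where
  "herm u w = (\<Sum>j\<in>UNIV. u$j * cnj (w$j))"

definition px :: "(real \<times> real \<Rightarrow> 'a::real_normed_vector) \<Rightarrow> real \<times> real \<Rightarrow> 'a" where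
  "px F p = vector_derivative (\<lambda>t. F (t, snd p)) (at (fst p))"

definition py :: "(real \<times> real \<Rightarrow> 'a::real_normed_vector) \<Rightarrow> real \<times> real \<Rightarrow> 'a" where
  "py F p = vector_derivative (\<lambda>t. F (fst p, t)) (at (snd p))"

fun pd :: "bool list \<Rightarrow> (real \<times> real \<Rightarrow> 'a::real_normed_vector) \<Rightarrow> real \<times> real \<Rightarrow> 'a" where
  "pd [] F = F"
| "pd (b # bs) F = (if b then px else py) (pd bs F)"

definition smooth_on :: "(real \<times> real) set \<Rightarrow> (real \<times> real \<Rightarrow> 'a::real_normed_vector) \<Rightarrow> bool" where
  "smooth_on S F \<longleftrightarrow> (\<forall>bs. pd bs F differentiable_on S)"

definition cnj_transpose :: "complex^3^3 \<Rightarrow> complex^3^3" where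
  "cnj_transpose A = (\<chi> i j. cnj (A$j$i))"

definition SU3 :: "complex^3^3 \<Rightarrow> bool" where
  "SU3 A \<longleftrightarrow> A ** cnj_transpose A = mat 1 \<and> det A = 1"

end

theory Submission
  imports Defs
begin

definition hx :: "(real \<times> real \<Rightarrow> 'a::real_normed_vector) \<Rightarrow> real \<times> real \<Rightarrow> 'a \<Rightarrow> bool" where
  "hx F p D \<longleftrightarrow> ((\<lambda>t. F (t, snd p)) has_vector_derivative D) (at (fst p))"
definition hy :: "(real \<times> real \<Rightarrow> 'a::real_normed_vector) \<Rightarrow> real \<times> real \<Rightarrow> 'a \<Rightarrow> bool" where
  "hy F p D \<longleftrightarrow> ((\<lambda>t. F (fst p, t)) has_vector_derivative D) (at (snd p))"

lemma hx_px: "hx F p D \<Longrightarrow> px F p = D"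
  unfolding hx_def px_def by (rule vector_derivative_at)
lemma hy_py: "hy F p D \<Longrightarrow> py F p = D"
  unfolding hy_def py_def by (rule vector_derivative_at)

lemma diff_hx: assumes "F differentiable (at p)" shows "hx F p (px F p)"
proof -
  have "(\<lambda>t. (t, snd p)) differentiable (at (fst p))"
    unfolding differentiable_def by (rule exI, auto intro!: derivative_eq_intros)
  moreover have "F differentiable (at ((\<lambda>t. (t, snd p)) (fst p)))" using assms by simp
  ultimately have "(F \<circ> (\<lambda>t. (t, snd p))) differentiable (at (fst p))"
    by (rule differentiable_chain_at)
  then show ?thesis unfolding hx_def px_def vector_derivative_works[symmetric] by (simp add: o_def)
qed

lemma diff_hy: assumes "F differentiable (at p)" shows "hy F p (py F p)"
proof -
  have "(\<lambda>t. (fst p, t)) differentiable (at (snd p))"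
    unfolding differentiable_def by (rule exI, auto intro!: derivative_eq_intros)
  moreover have "F differentiable (at ((\<lambda>t. (fst p, t)) (snd p)))" using assms by simp
  ultimately have "(F \<circ> (\<lambda>t. (fst p, t))) differentiable (at (snd p))"
    by (rule differentiable_chain_at)
  then show ?thesis unfolding hy_def py_def vector_derivative_works[symmetric] by (simp add: o_def)
qed

lemma hx_local: assumes "open S" "p \<in> S" "\<And>q. q \<in> S \<Longrightarrow> F q = G q" "hx G p D" shows "hx F p D"
proof -
  have "open ((\<lambda>t. (t, snd p)) -` S)"
    by (rule continuous_open_vimage[OF assms(1)]) (auto intro!: continuous_intros)
  then have o: "open {t. (t, snd p) \<in> S}" by (simp add: vimage_def)
  show ?thesis using assms(4) unfolding hx_def
    by (rule has_vector_derivative_transform_within_open[OF _ o]) (use assms in auto)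
qed

lemma hy_local: assumes "open S" "p \<in> S" "\<And>q. q \<in> S \<Longrightarrow> F q = G q" "hy G p D" shows "hy F p D"
proof -
  have "open ((\<lambda>t. (fst p, t)) -` S)"
    by (rule continuous_open_vimage[OF assms(1)]) (auto intro!: continuous_intros)
  then have o: "open {t. (fst p, t) \<in> S}" by (simp add: vimage_def)
  show ?thesis using assms(4) unfolding hy_def
    by (rule has_vector_derivative_transform_within_open[OF _ o]) (use assms in auto)
qed

lemma diff_local: assumes "open S" "p \<in> S" "\<And>q. q \<in> S \<Longrightarrow> F q = G q" "G differentiable (at p)"
  shows "F differentiable (at p)"
  using assms(4) unfolding differentiable_def
  using has_derivative_transform_within_open[OF _ assms(1,2), of G _ "UNIV" F] assms(3) by metis

lemma bb_diff:   fixes A :: "real\<times>real \<Rightarrow> 'a::real_normed_vector" and B :: "real\<times>real \<Rightarrow> 'b::real_normed_vector" and prod :: "'a \<Rightarrow> 'b \<Rightarrow> 'c::real_normed_vector"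
  assumes "bounded_bilinear prod" "A differentiable (at p)" "B differentiable (at p)"
  shows "(\<lambda>q. prod (A q) (B q)) differentiable (at p)"
  using assms bounded_bilinear.FDERIV[OF assms(1)] unfolding differentiable_def by blast

lemma bl_diff:   fixes A :: "real\<times>real \<Rightarrow> 'a::real_normed_vector" and L :: "'a \<Rightarrow> 'b::real_normed_vector"
  assumes "bounded_linear L" "A differentiable (at p)"
  shows "(\<lambda>q. L (A q)) differentiable (at p)"
  using assms bounded_linear.has_derivative[OF assms(1)] unfolding differentiable_def by blast

lemma bb_px:   fixes A :: "real\<times>real \<Rightarrow> 'a::real_normed_vector" and B :: "real\<times>real \<Rightarrow> 'b::real_normed_vector" and prod :: "'a \<Rightarrow> 'b \<Rightarrow> 'c::real_normed_vector"
  assumes "bounded_bilinear prod" "A differentiable (at p)" "B differentiable (at p)"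
  shows "px (\<lambda>q. prod (A q) (B q)) p = prod (px A p) (B p) + prod (A p) (px B p)"
proof -
  have "hx (\<lambda>q. prod (A q) (B q)) p (prod (A p) (px B p) + prod (px A p) (B p))"
    using bounded_bilinear.has_vector_derivative[OF assms(1) diff_hx[OF assms(2), unfolded hx_def]
        diff_hx[OF assms(3), unfolded hx_def]] unfolding hx_def by simp
  then show ?thesis by (simp add: hx_px add.commute)
qed

lemma bb_py:   fixes A :: "real\<times>real \<Rightarrow> 'a::real_normed_vector" and B :: "real\<times>real \<Rightarrow> 'b::real_normed_vector" and prod :: "'a \<Rightarrow> 'b \<Rightarrow> 'c::real_normed_vector"
  assumes "bounded_bilinear prod" "A differentiable (at p)" "B differentiable (at p)"
  shows "py (\<lambda>q. prod (A q) (B q)) p = prod (py A p) (B p) + prod (A p) (py B p)"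
proof -
  have "hy (\<lambda>q. prod (A q) (B q)) p (prod (A p) (py B p) + prod (py A p) (B p))"
    using bounded_bilinear.has_vector_derivative[OF assms(1) diff_hy[OF assms(2), unfolded hy_def]
        diff_hy[OF assms(3), unfolded hy_def]] unfolding hy_def by simp
  then show ?thesis by (simp add: hy_py add.commute)
qed

lemma bl_px:
  fixes A :: "real\<times>real \<Rightarrow> 'a::real_normed_vector" and L :: "'a \<Rightarrow> 'b::real_normed_vector"
  assumes "bounded_linear L" "A differentiable (at p)"
  shows "px (\<lambda>q. L (A q)) p = L (px A p)"
  apply (rule hx_px)
  using bounded_linear.has_vector_derivative[OF assms(1) diff_hx[OF assms(2), unfolded hx_def]]
  unfolding hx_def by simp
lemma bl_py:
  fixes A :: "real\<times>real \<Rightarrow> 'a::real_normed_vector" and L :: "'a \<Rightarrow> 'b::real_normed_vector"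
  assumes "bounded_linear L" "A differentiable (at p)"
  shows "py (\<lambda>q. L (A q)) p = L (py A p)"
  apply (rule hy_py)
  using bounded_linear.has_vector_derivative[OF assms(1) diff_hy[OF assms(2), unfolded hy_def]]
  unfolding hy_def by simp
lemma px_add: assumes "A differentiable (at p)" "B differentiable (at p)"
  shows "px (\<lambda>q. A q + B q) p = px A p + px B p"
  apply (rule hx_px)
  using has_vector_derivative_add[OF diff_hx[OF assms(1), unfolded hx_def] diff_hx[OF assms(2), unfolded hx_def]]
  unfolding hx_def by simp
lemma px_diff: assumes "A differentiable (at p)" "B differentiable (at p)"
  shows "px (\<lambda>q. A q - B q) p = px A p - px B p"
  apply (rule hx_px)
  using has_vector_derivative_diff[OF diff_hx[OF assms(1), unfolded hx_def] diff_hx[OF assms(2), unfolded hx_def]]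
  unfolding hx_def by simp
lemma px_minus: assumes "A differentiable (at p)"
  shows "px (\<lambda>q. - A q) p = - px A p"
  apply (rule hx_px)
  using has_vector_derivative_minus[OF diff_hx[OF assms(1), unfolded hx_def]]
  unfolding hx_def by simp
lemma py_add: assumes "A differentiable (at p)" "B differentiable (at p)"
  shows "py (\<lambda>q. A q + B q) p = py A p + py B p"
  apply (rule hy_py)
  using has_vector_derivative_add[OF diff_hy[OF assms(1), unfolded hy_def] diff_hy[OF assms(2), unfolded hy_def]]
  unfolding hy_def by simp
lemma py_diff: assumes "A differentiable (at p)" "B differentiable (at p)"
  shows "py (\<lambda>q. A q - B q) p = py A p - py B p"
  apply (rule hy_py)
  using has_vector_derivative_diff[OF diff_hy[OF assms(1), unfolded hy_def] diff_hy[OF assms(2), unfolded hy_def]]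
  unfolding hy_def by simp
lemma py_minus: assumes "A differentiable (at p)"
  shows "py (\<lambda>q. - A q) p = - py A p"
  apply (rule hy_py)
  using has_vector_derivative_minus[OF diff_hy[OF assms(1), unfolded hy_def]]
  unfolding hy_def by simp
lemma px_const: "px (\<lambda>q. c) p = 0"
  unfolding px_def by (rule vector_derivative_at) simp
lemma py_const: "py (\<lambda>q. c) p = 0"
  unfolding py_def by (rule vector_derivative_at) simp

lemma px_local: assumes "open S" "p \<in> S" "\<And>q. q \<in> S \<Longrightarrow> F q = G q" "G differentiable (at p)"
  shows "px F p = px G p"
  using hx_local[OF assms(1-3) diff_hx[OF assms(4)]] by (rule hx_px)
lemma py_local: assumes "open S" "p \<in> S" "\<And>q. q \<in> S \<Longrightarrow> F q = G q" "G differentiable (at p)"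
  shows "py F p = py G p"
  using hy_local[OF assms(1-3) diff_hy[OF assms(4)]] by (rule hy_py)

lemma px_exp: assumes "(a :: real\<times>real \<Rightarrow> 'a::{banach,real_normed_field}) differentiable (at p)"
  shows "px (\<lambda>q. exp (a q)) p = exp (a p) * px a p"
proof -
  have "((exp \<circ> (\<lambda>t. a (t, snd p))) has_vector_derivative (px a p * exp (a p))) (at (fst p))"
    using field_vector_diff_chain_at[OF diff_hx[OF assms, unfolded hx_def], of exp "exp (a p)"]
    by (simp add: DERIV_exp)
  then show ?thesis by (intro hx_px) (simp add: hx_def o_def mult.commute)
qed
lemma py_exp: assumes "(a :: real\<times>real \<Rightarrow> 'a::{banach,real_normed_field}) differentiable (at p)"
  shows "py (\<lambda>q. exp (a q)) p = exp (a p) * py a p"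
proof -
  have "((exp \<circ> (\<lambda>t. a (fst p, t))) has_vector_derivative (py a p * exp (a p))) (at (snd p))"
    using field_vector_diff_chain_at[OF diff_hy[OF assms, unfolded hy_def], of exp "exp (a p)"]
    by (simp add: DERIV_exp)
  then show ?thesis by (intro hy_py) (simp add: hy_def o_def mult.commute)
qed

lemma diff_exp: assumes "(a :: real\<times>real \<Rightarrow> 'a::{banach,real_normed_field}) differentiable (at p)"
  shows "(\<lambda>q. exp (a q)) differentiable (at p)"
proof -
  have "exp field_differentiable (at (a p))" unfolding field_differentiable_def using DERIV_exp by blast
  then have "exp differentiable (at (a p))" by (rule field_differentiable_imp_differentiable)
  from differentiable_chain_at[OF assms this] show ?thesis by (simp add: o_def)
qed

lemma herm_linear1: "linear (\<lambda>u. herm u w)"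
  by (rule linearI) (simp add: herm_def sum.distrib algebra_simps, simp only: herm_def vector_scaleR_component, simp add: scaleR_conv_of_real sum_distrib_left algebra_simps)
lemma herm_linear2: "linear (\<lambda>w. herm u w)"
  by (rule linearI) (simp add: herm_def sum.distrib algebra_simps, simp only: herm_def vector_scaleR_component, simp add: scaleR_conv_of_real sum_distrib_left algebra_simps)
lemma bb_herm: "bounded_bilinear herm"
  unfolding bilinear_conv_bounded_bilinear[symmetric] bilinear_def
  using herm_linear1 herm_linear2 by blast

lemma smult_linear1: "linear (\<lambda>c::complex. c *s (w::complex^'n))"
  by (rule linearI) (simp add: vec_eq_iff algebra_simps, simp only: vec_eq_iff vector_scaleR_component vector_smult_component, simp add: scaleR_conv_of_real algebra_simps)
lemma smult_linear2: "linear (\<lambda>w::complex^'n. (c::complex) *s w)"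
  by (rule linearI) (simp add: vec_eq_iff algebra_simps, simp only: vec_eq_iff vector_scaleR_component vector_smult_component, simp add: scaleR_conv_of_real algebra_simps)
lemma bb_smult: "bounded_bilinear (\<lambda>(c::complex) (w::complex^'n). c *s w)"
  unfolding bilinear_conv_bounded_bilinear[symmetric] bilinear_def
  using smult_linear1 smult_linear2 by blast

lemma schwarz_real:
  fixes F Fx Fy Fxy Fyx :: "real\<times>real \<Rightarrow> real"
  assumes S: "open S" "p \<in> S"
   and dx: "\<forall>q\<in>S. hx F q (Fx q)" and dy: "\<forall>q\<in>S. hy F q (Fy q)"
   and dxy: "\<forall>q\<in>S. hy Fx q (Fxy q)" and dyx: "\<forall>q\<in>S. hx Fy q (Fyx q)"
   and c1: "continuous_on S Fxy" and c2: "continuous_on S Fyx"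
  shows "Fxy p = Fyx p"
proof (rule ccontr)
  assume ne: "Fxy p \<noteq> Fyx p"
  define d where "d = \<bar>Fxy p - Fyx p\<bar>"
  have d: "d > 0" using ne by (simp add: d_def)
  obtain a b where p: "p = (a,b)" by (cases p)
  obtain e0 where e0: "e0 > 0" "ball p e0 \<subseteq> S" using S open_contains_ball by blast
  have "isCont Fxy p" using c1 S continuous_on_eq_continuous_at by blast
  then obtain e1 where e1: "e1 > 0" "\<forall>q. dist q p < e1 \<longrightarrow> dist (Fxy q) (Fxy p) < d/2"
    using d unfolding continuous_at_eps_delta by (meson half_gt_zero)
  have "isCont Fyx p" using c2 S continuous_on_eq_continuous_at by blast
  then obtain e2 where e2: "e2 > 0" "\<forall>q. dist q p < e2 \<longrightarrow> dist (Fyx q) (Fyx p) < d/2"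
    using d unfolding continuous_at_eps_delta by (meson half_gt_zero)
  define h where "h = min e0 (min e1 e2) / 3"
  have h: "h > 0" using e0 e1 e2 by (simp add: h_def)
  have near: "dist (s,t) p < min e0 (min e1 e2)" if "a \<le> s" "s \<le> a+h" "b \<le> t" "t \<le> b+h" for s t
  proof -
    have "dist (s,t) p = sqrt ((dist s a)\<^sup>2 + (dist t b)\<^sup>2)" by (simp add: p dist_Pair_Pair)
    also have "\<dots> \<le> \<bar>dist s a\<bar> + \<bar>dist t b\<bar>" by (rule sqrt_sum_squares_le_sum_abs)
    also have "\<dots> \<le> 2*h" using that by (simp add: dist_real_def)
    also have "\<dots> < min e0 (min e1 e2)" using e0 e1 e2 by (simp add: h_def min_def)
    finally show ?thesis .
  qed
  have inS: "(s,t) \<in> S" if "a \<le> s" "s \<le> a+h" "b \<le> t" "t \<le> b+h" for s t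
    using near[OF that] e0(2) by (auto simp: dist_commute)
  define \<Delta> where "\<Delta> = F (a+h,b+h) - F (a+h,b) - F (a,b+h) + F (a,b)"
  have "\<exists>z. a < z \<and> z < a+h \<and> ((\<lambda>s. F (s,b+h) - F (s,b)) (a+h) - (\<lambda>s. F (s,b+h) - F (s,b)) a
         = (a+h - a) * (Fx (z,b+h) - Fx (z,b)))"
  proof (rule MVT2)
    show "a < a+h" using h by simp
    fix s assume "a \<le> s" "s \<le> a+h"
    then have "hx F (s,b+h) (Fx (s,b+h))" "hx F (s,b) (Fx (s,b))" using dx inS h by auto
    then show "((\<lambda>s. F (s,b+h) - F (s,b)) has_real_derivative (Fx (s,b+h) - Fx (s,b))) (at s)"
      unfolding hx_def has_real_derivative_iff_has_vector_derivative
      by (auto intro!: derivative_eq_intros)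
  qed
  then obtain \<xi> where \<xi>: "a < \<xi>" "\<xi> < a+h" "\<Delta> = h * (Fx (\<xi>,b+h) - Fx (\<xi>,b))"
    by (auto simp: \<Delta>_def algebra_simps)
  have "\<exists>z. b < z \<and> z < b+h \<and> ((\<lambda>t. Fx (\<xi>,t)) (b+h) - (\<lambda>t. Fx (\<xi>,t)) b = (b+h - b) * Fxy (\<xi>,z))"
  proof (rule MVT2)
    show "b < b+h" using h by simp
    fix t assume "b \<le> t" "t \<le> b+h"
    then have "hy Fx (\<xi>,t) (Fxy (\<xi>,t))" using dxy inS \<xi> by auto
    then show "((\<lambda>t. Fx (\<xi>,t)) has_real_derivative Fxy (\<xi>,t)) (at t)"
      unfolding hy_def has_real_derivative_iff_has_vector_derivative by simp
  qed
  then obtain \<eta> where \<eta>: "b < \<eta>" "\<eta> < b+h" "\<Delta> = h * (h * Fxy (\<xi>,\<eta>))"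
    using \<xi>(3) by auto
  have "\<exists>z. b < z \<and> z < b+h \<and> ((\<lambda>t. F (a+h,t) - F (a,t)) (b+h) - (\<lambda>t. F (a+h,t) - F (a,t)) b
         = (b+h - b) * (Fy (a+h,z) - Fy (a,z)))"
  proof (rule MVT2)
    show "b < b+h" using h by simp
    fix t assume "b \<le> t" "t \<le> b+h"
    then have "hy F (a+h,t) (Fy (a+h,t))" "hy F (a,t) (Fy (a,t))" using dy inS h by auto
    then show "((\<lambda>t. F (a+h,t) - F (a,t)) has_real_derivative (Fy (a+h,t) - Fy (a,t))) (at t)"
      unfolding hy_def has_real_derivative_iff_has_vector_derivative
      by (auto intro!: derivative_eq_intros)
  qed
  then obtain \<eta>' where \<eta>': "b < \<eta>'" "\<eta>' < b+h" "\<Delta> = h * (Fy (a+h,\<eta>') - Fy (a,\<eta>'))"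
    by (auto simp: \<Delta>_def algebra_simps)
  have "\<exists>z. a < z \<and> z < a+h \<and> ((\<lambda>s. Fy (s,\<eta>')) (a+h) - (\<lambda>s. Fy (s,\<eta>')) a = (a+h - a) * Fyx (z,\<eta>'))"
  proof (rule MVT2)
    show "a < a+h" using h by simp
    fix s assume "a \<le> s" "s \<le> a+h"
    then have "hx Fy (s,\<eta>') (Fyx (s,\<eta>'))" using dyx inS \<eta>' by auto
    then show "((\<lambda>s. Fy (s,\<eta>')) has_real_derivative Fyx (s,\<eta>')) (at s)"
      unfolding hx_def has_real_derivative_iff_has_vector_derivative by simp
  qed
  then obtain \<xi>' where \<xi>': "a < \<xi>'" "\<xi>' < a+h" "\<Delta> = h * (h * Fyx (\<xi>',\<eta>'))"
    using \<eta>'(3) by auto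
  have eq: "Fxy (\<xi>,\<eta>) = Fyx (\<xi>',\<eta>')" using \<eta>(3) \<xi>'(3) h by simp
  have "dist (\<xi>,\<eta>) p < e1" using near[of \<xi> \<eta>] \<xi> \<eta> by simp
  then have 1: "\<bar>Fxy (\<xi>,\<eta>) - Fxy p\<bar> < d/2" using e1 by (simp add: dist_real_def)
  have "dist (\<xi>',\<eta>') p < e2" using near[of \<xi>' \<eta>'] \<xi>' \<eta>' by simp
  then have 2: "\<bar>Fyx (\<xi>',\<eta>') - Fyx p\<bar> < d/2" using e2 by (simp add: dist_real_def)
  from 1 2 eq show False by (simp add: d_def abs_if split: if_splits) linarith?
qed

lemma diff_cont: "\<forall>q\<in>S. H differentiable (at q) \<Longrightarrow> continuous_on S H"
  by (meson continuous_at_imp_continuous_on differentiable_imp_continuous_within)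

lemma schwarz_lin:
  fixes G :: "real\<times>real \<Rightarrow> 'a::real_normed_vector" and L :: "'a \<Rightarrow> real"
  assumes L: "bounded_linear L" and S: "open S" "p \<in> S"
    and d0: "\<forall>q\<in>S. G differentiable (at q)"
    and d1: "\<forall>q\<in>S. px G differentiable (at q)" and d2: "\<forall>q\<in>S. py G differentiable (at q)"
    and d3: "\<forall>q\<in>S. py (px G) differentiable (at q)" and d4: "\<forall>q\<in>S. px (py G) differentiable (at q)"
  shows "L (py (px G) p) = L (px (py G) p)"
proof (rule schwarz_real[OF S, of "\<lambda>q. L (G q)" "\<lambda>q. L (px G q)" "\<lambda>q. L (py G q)"])
  show "\<forall>q\<in>S. hx (\<lambda>q. L (G q)) q (L (px G q))"
    using d0 diff_hx bounded_linear.has_vector_derivative[OF L] unfolding hx_def by blast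
  show "\<forall>q\<in>S. hy (\<lambda>q. L (G q)) q (L (py G q))"
    using d0 diff_hy bounded_linear.has_vector_derivative[OF L] unfolding hy_def by blast
  show "\<forall>q\<in>S. hy (\<lambda>q. L (px G q)) q (L (py (px G) q))"
    using d1 diff_hy bounded_linear.has_vector_derivative[OF L] unfolding hy_def by blast
  show "\<forall>q\<in>S. hx (\<lambda>q. L (py G q)) q (L (px (py G) q))"
    using d2 diff_hx bounded_linear.has_vector_derivative[OF L] unfolding hx_def by blast
  show "continuous_on S (\<lambda>q. L (py (px G) q))"
    by (rule bounded_linear.continuous_on[OF L diff_cont[OF d3]])
  show "continuous_on S (\<lambda>q. L (px (py G) q))"
    by (rule bounded_linear.continuous_on[OF L diff_cont[OF d4]])
qed

lemma schwarz_vec: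
  fixes G :: "real\<times>real \<Rightarrow> complex^3"
  assumes S: "open S" "p \<in> S"
    and "\<forall>q\<in>S. G differentiable (at q)"
    and "\<forall>q\<in>S. px G differentiable (at q)" and "\<forall>q\<in>S. py G differentiable (at q)"
    and "\<forall>q\<in>S. py (px G) differentiable (at q)" and "\<forall>q\<in>S. px (py G) differentiable (at q)"
  shows "py (px G) p = px (py G) p"
proof -
  have "Re (py (px G) p $ j) = Re (px (py G) p $ j) \<and> Im (py (px G) p $ j) = Im (px (py G) p $ j)" for j
  proof
    have "bounded_linear (\<lambda>x::complex^3. Re (x $ j))"
      by (rule bounded_linear_compose[OF bounded_linear_Re bounded_linear_vec_nth])
    from schwarz_lin[OF this assms] show "Re (py (px G) p $ j) = Re (px (py G) p $ j)" .
    have "bounded_linear (\<lambda>x::complex^3. Im (x $ j))"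
      by (rule bounded_linear_compose[OF bounded_linear_Im bounded_linear_vec_nth])
    from schwarz_lin[OF this assms] show "Im (py (px G) p $ j) = Im (px (py G) p $ j)" .
  qed
  then show ?thesis by (simp add: vec_eq_iff complex_eq_iff)
qed

lemma schwarz_realf:
  fixes G :: "real\<times>real \<Rightarrow> real"
  assumes S: "open S" "p \<in> S"
    and "\<forall>q\<in>S. G differentiable (at q)"
    and "\<forall>q\<in>S. px G differentiable (at q)" and "\<forall>q\<in>S. py G differentiable (at q)"
    and "\<forall>q\<in>S. py (px G) differentiable (at q)" and "\<forall>q\<in>S. px (py G) differentiable (at q)"
  shows "py (px G) p = px (py G) p"
  using schwarz_lin[OF bounded_linear_ident assms] by simp

lemma smooth_pd: "smooth_on S F \<Longrightarrow> q \<in> S \<Longrightarrow> open S \<Longrightarrow> pd bs F differentiable (at q)"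
  unfolding smooth_on_def differentiable_on_def
  by (metis at_within_open)

lemma ortho: assumes "A ** cnj_transpose A = mat 1"
  shows "herm (A$i) (A$j) = (if i = j then 1 else 0)"
proof -
  have "(A ** cnj_transpose A)$i$j = (mat 1 :: complex^3^3)$i$j" using assms by simp
  then show ?thesis by (simp add: matrix_matrix_mult_def cnj_transpose_def mat_def herm_def)
qed

lemma expand: assumes "(A::complex^3^3) ** cnj_transpose A = mat 1"
  shows "w = (\<Sum>k\<in>UNIV. herm w (A$k) *s A$k)"
proof -
  have B: "cnj_transpose A ** A = mat 1" using assms matrix_left_right_inverse by blast
  have d: "(\<Sum>k\<in>UNIV. cnj (A$k$i) * A$k$l) = (if i = l then 1 else 0)" for i l
  proof -
    have "(cnj_transpose A ** A)$i$l = (mat 1 :: complex^3^3)$i$l" using B by simp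
    then show ?thesis by (simp add: matrix_matrix_mult_def cnj_transpose_def mat_def)
  qed
  have "(\<Sum>k\<in>UNIV. herm w (A$k) *s A$k) $ l = w $ l" for l
  proof -
    have "(\<Sum>k\<in>UNIV. herm w (A$k) *s A$k) $ l = (\<Sum>k\<in>UNIV. (\<Sum>i\<in>UNIV. w$i * cnj (A$k$i)) * A$k$l)"
      by (simp add: sum_component herm_def)
    also have "\<dots> = (\<Sum>i\<in>UNIV. w$i * (\<Sum>k\<in>UNIV. cnj (A$k$i) * A$k$l))"
      by (simp only: sum_distrib_left sum_distrib_right mult.assoc) (rule sum.swap)
    also have "\<dots> = w$l" by (simp add: d if_distrib cong: if_cong)
    finally show ?thesis .
  qed
  then show ?thesis by (simp add: vec_eq_iff)
qed

lemma herm_sum_left: "herm (\<Sum>k\<in>K. f k) w = (\<Sum>k\<in>K. herm (f k) w)"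
  unfolding herm_def sum_component sum_distrib_right by (rule sum.swap)
lemma herm_smult_left: "herm (c *s u) w = c * herm u w"
  by (simp add: herm_def sum_distrib_left mult.assoc)
lemma herm_smult_right: "herm u (c *s w) = cnj c * herm u w"
  by (simp add: herm_def sum_distrib_left algebra_simps)
lemma herm_cnj: "herm w u = cnj (herm u w)"
  by (simp add: herm_def mult.commute)
lemma herm_scaleR_left: "herm (c *\<^sub>R u) w = of_real c * herm u w"
  by (simp only: herm_def vector_scaleR_component, simp add: sum_distrib_left mult.assoc scaleR_conv_of_real)
lemma herm_scaleR_right: "herm u (c *\<^sub>R w) = of_real c * herm u w"
  by (simp only: herm_def vector_scaleR_component, simp add: sum_distrib_left algebra_simps scaleR_conv_of_real)
lemma herm_add_left: "herm (u + u') w = herm u w + herm u' w"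
  by (simp add: herm_def sum.distrib algebra_simps)
lemma herm_add_right: "herm u (w + w') = herm u w + herm u w'"
  by (simp add: herm_def sum.distrib algebra_simps)
lemma herm_diff_left: "herm (u - u') w = herm u w - herm u' w"
  by (simp add: herm_def sum_subtractf algebra_simps)
lemma herm_diff_right: "herm u (w - w') = herm u w - herm u w'"
  by (simp add: herm_def sum_subtractf algebra_simps)
lemma herm_minus_left: "herm (- u) w = - herm u w"
  by (simp add: herm_def sum_negf)
lemma herm_minus_right: "herm u (- w) = - herm u w"
  by (simp add: herm_def sum_negf)
lemma herm_self: "herm u u = of_real ((norm u)\<^sup>2)"
proof -
  have 1: "herm u u = (\<Sum>j\<in>UNIV. of_real ((cmod (u$j))\<^sup>2))"
    unfolding herm_def by (simp only: complex_norm_square)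
  have 2: "(\<Sum>j\<in>UNIV. (norm (u$j))\<^sup>2) = (norm u)\<^sup>2"
    by (simp add: norm_vec_def L2_set_def sum_nonneg)
  have 3: "(\<Sum>j\<in>UNIV. of_real ((cmod (u$j))\<^sup>2)) = (of_real (\<Sum>j\<in>UNIV. (norm (u$j))\<^sup>2) :: complex)"
    by (simp only: of_real_sum)
  show ?thesis unfolding 1 3 2 ..
qed

lemma parseval: assumes "(A::complex^3^3) ** cnj_transpose A = mat 1"
  shows "herm u w = (\<Sum>k\<in>UNIV. herm u (A$k) * cnj (herm w (A$k)))"
proof -
  have "herm u w = herm (\<Sum>k\<in>UNIV. herm u (A$k) *s A$k) w" using expand[OF assms] by metis
  also have "\<dots> = (\<Sum>k\<in>UNIV. herm u (A$k) * herm (A$k) w)"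
    by (simp add: herm_sum_left herm_smult_left)
  also have "\<dots> = (\<Sum>k\<in>UNIV. herm u (A$k) * cnj (herm w (A$k)))"
    by (rule sum.cong[OF refl]) (metis herm_cnj)
  finally show ?thesis .
qed

definition Det3 :: "complex^3 \<Rightarrow> complex^3 \<Rightarrow> complex^3 \<Rightarrow> complex" where
  "Det3 u w z = u$1*w$2*z$3 + u$2*w$3*z$1 + u$3*w$1*z$2 - u$1*w$3*z$2 - u$2*w$1*z$3 - u$3*w$2*z$1"

lemma det_Det3: "det (vector [u,w,z] :: complex^3^3) = Det3 u w z"
  by (simp add: det_3 Det3_def)

lemma Det3_lin1: "Det3 (a0 *s e0 + a1 *s e1 + a2 *s e2) e1 e2 = a0 * Det3 e0 e1 e2"
  by (simp add: Det3_def algebra_simps)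
lemma Det3_lin2: "Det3 e0 (a0 *s e0 + a1 *s e1 + a2 *s e2) e2 = a1 * Det3 e0 e1 e2"
  by (simp add: Det3_def algebra_simps)
lemma Det3_lin3: "Det3 e0 e1 (a0 *s e0 + a1 *s e1 + a2 *s e2) = a2 * Det3 e0 e1 e2"
  by (simp add: Det3_def algebra_simps)

lemma Det3_hvd:
  assumes u: "(u has_vector_derivative u') (at t)" and w: "(w has_vector_derivative w') (at t)"
    and z: "(z has_vector_derivative z') (at t)"
  shows "((\<lambda>t. Det3 (u t) (w t) (z t)) has_vector_derivative
          (Det3 u' (w t) (z t) + Det3 (u t) w' (z t) + Det3 (u t) (w t) z')) (at t)"
proof -
  have c: "((\<lambda>t. f t $ j) has_vector_derivative f' $ j) (at t)"
    if "(f has_vector_derivative f') (at t)" for f :: "real \<Rightarrow> complex^3" and f' j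
    using bounded_linear.has_vector_derivative[OF bounded_linear_vec_nth that] .
  show ?thesis unfolding Det3_def
    apply (rule has_vector_derivative_eq_rhs)
     apply ((rule has_vector_derivative_diff has_vector_derivative_add has_vector_derivative_mult | rule c, rule u | rule c, rule w | rule c, rule z)+)[1]
    apply (simp add: algebra_simps)
    done
qed

lemma px_Det3:
  assumes "U differentiable (at p)" "W differentiable (at p)" "Z differentiable (at p)"
  shows "px (\<lambda>q. Det3 (U q) (W q) (Z q)) p = Det3 (px U p) (W p) (Z p) + Det3 (U p) (px W p) (Z p) + Det3 (U p) (W p) (px Z p)"
  apply (rule hx_px)
  using Det3_hvd[OF diff_hx[OF assms(1), unfolded hx_def] diff_hx[OF assms(2), unfolded hx_def] diff_hx[OF assms(3), unfolded hx_def]]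
  unfolding hx_def by simp
lemma py_Det3:
  assumes "U differentiable (at p)" "W differentiable (at p)" "Z differentiable (at p)"
  shows "py (\<lambda>q. Det3 (U q) (W q) (Z q)) p = Det3 (py U p) (W p) (Z p) + Det3 (U p) (py W p) (Z p) + Det3 (U p) (W p) (py Z p)"
  apply (rule hy_py)
  using Det3_hvd[OF diff_hy[OF assms(1), unfolded hy_def] diff_hy[OF assms(2), unfolded hy_def] diff_hy[OF assms(3), unfolded hy_def]]
  unfolding hy_def by simp

lemmas diff_smult = bb_diff[OF bb_smult]
lemmas diff_herm = bb_diff[OF bb_herm]
lemmas diff_ofreal = bl_diff[OF bounded_linear_of_real]
lemmas diff_Re = bl_diff[OF bounded_linear_Re]
lemmas diff_Im = bl_diff[OF bounded_linear_Im]
lemmas diff_cnj = bl_diff[OF bounded_linear_cnj]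
lemmas Dintros = diff_smult diff_herm diff_ofreal diff_exp differentiable_mult differentiable_scaleR
  differentiable_add differentiable_diff differentiable_minus differentiable_const

lemmas px_smult = bb_px[OF bb_smult]
lemmas py_smult = bb_py[OF bb_smult]
lemmas px_herm = bb_px[OF bb_herm]
lemmas py_herm = bb_py[OF bb_herm]
lemmas px_scaleR = bb_px[OF bounded_bilinear_scaleR]
lemmas py_scaleR = bb_py[OF bounded_bilinear_scaleR]
lemmas px_mult = bb_px[OF bounded_bilinear_mult]
lemmas py_mult = bb_py[OF bounded_bilinear_mult]
lemmas px_ofreal = bl_px[OF bounded_linear_of_real]
lemmas py_ofreal = bl_py[OF bounded_linear_of_real]
lemmas px_Im = bl_px[OF bounded_linear_Im]
lemmas py_Im = bl_py[OF bounded_linear_Im]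

lemma px_const_on: assumes "open S" "q \<in> S" "\<And>q. q \<in> S \<Longrightarrow> F q = c" shows "px F q = 0"
  using px_local[OF assms(1,2), of F "\<lambda>_. c"] assms(3) px_const by simp
lemma py_const_on: assumes "open S" "q \<in> S" "\<And>q. q \<in> S \<Longrightarrow> F q = c" shows "py F q = 0"
  using py_local[OF assms(1,2), of F "\<lambda>_. c"] assms(3) py_const by simp

lemma antiherm_x: assumes "open S" "q \<in> S" "X differentiable (at q)" "Y differentiable (at q)"
  "\<And>q. q \<in> S \<Longrightarrow> herm (X q) (Y q) = c"
  shows "herm (px X q) (Y q) = - cnj (herm (px Y q) (X q))"
proof -
  have "px (\<lambda>q. herm (X q) (Y q)) q = 0" by (rule px_const_on[OF assms(1,2,5)])
  then have "herm (px X q) (Y q) + herm (X q) (px Y q) = 0" using px_herm[OF assms(3,4)] by simp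
  moreover have "herm (X q) (px Y q) = cnj (herm (px Y q) (X q))" by (rule herm_cnj)
  ultimately show ?thesis by (simp add: eq_neg_iff_add_eq_0)
qed
lemma antiherm_y: assumes "open S" "q \<in> S" "X differentiable (at q)" "Y differentiable (at q)"
  "\<And>q. q \<in> S \<Longrightarrow> herm (X q) (Y q) = c"
  shows "herm (py X q) (Y q) = - cnj (herm (py Y q) (X q))"
proof -
  have "py (\<lambda>q. herm (X q) (Y q)) q = 0" by (rule py_const_on[OF assms(1,2,5)])
  then have "herm (py X q) (Y q) + herm (X q) (py Y q) = 0" using py_herm[OF assms(3,4)] by simp
  moreover have "herm (X q) (py Y q) = cnj (herm (py Y q) (X q))" by (rule herm_cnj)
  ultimately show ?thesis by (simp add: eq_neg_iff_add_eq_0)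
qed

lemma px_lin2:
  fixes a b :: "real\<times>real \<Rightarrow> real" and X Y :: "real\<times>real \<Rightarrow> 'a::real_normed_vector"
  assumes "a differentiable (at p)" "X differentiable (at p)" "b differentiable (at p)" "Y differentiable (at p)"
  shows "px (\<lambda>q. a q *\<^sub>R X q + b q *\<^sub>R Y q) p = px a p *\<^sub>R X p + a p *\<^sub>R px X p + (px b p *\<^sub>R Y p + b p *\<^sub>R px Y p)"
  using px_add[OF differentiable_scaleR[OF assms(1,2)] differentiable_scaleR[OF assms(3,4)]]
    px_scaleR[OF assms(1,2)] px_scaleR[OF assms(3,4)] by simp

lemma py_lin2:
  fixes a b :: "real\<times>real \<Rightarrow> real" and X Y :: "real\<times>real \<Rightarrow> 'a::real_normed_vector"
  assumes "a differentiable (at p)" "X differentiable (at p)" "b differentiable (at p)" "Y differentiable (at p)"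
  shows "py (\<lambda>q. a q *\<^sub>R X q + b q *\<^sub>R Y q) p = py a p *\<^sub>R X p + a p *\<^sub>R py X p + (py b p *\<^sub>R Y p + b p *\<^sub>R py Y p)"
  using py_add[OF differentiable_scaleR[OF assms(1,2)] differentiable_scaleR[OF assms(3,4)]]
    py_scaleR[OF assms(1,2)] py_scaleR[OF assms(3,4)] by simp

lemma px_cc:
  fixes a b :: "real\<times>real \<Rightarrow> real"
  assumes "a differentiable (at p)" "b differentiable (at p)"
  shows "px (\<lambda>q. c1 * complex_of_real (a q) + c2 * complex_of_real (b q)) p
     = c1 * complex_of_real (px a p) + c2 * complex_of_real (px b p)"
proof -
  have L: "bounded_linear (\<lambda>x. c * complex_of_real x)" for c
    by (rule bounded_linear_compose[OF bounded_linear_mult_right bounded_linear_of_real])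
  show ?thesis
    using px_add[OF bl_diff[OF L assms(1)] bl_diff[OF L assms(2)]] bl_px[OF L assms(1)] bl_px[OF L assms(2)]
    by simp
qed

lemma diff_cc:
  fixes a b :: "real\<times>real \<Rightarrow> real"
  assumes "a differentiable (at p)" "b differentiable (at p)"
  shows "(\<lambda>q. c1 * complex_of_real (a q) + c2 * complex_of_real (b q)) differentiable (at p)"
  using assms by (intro differentiable_add differentiable_mult differentiable_const diff_ofreal)

lemma py_cc:
  fixes a b :: "real\<times>real \<Rightarrow> real"
  assumes "a differentiable (at p)" "b differentiable (at p)"
  shows "py (\<lambda>q. c1 * complex_of_real (a q) + c2 * complex_of_real (b q)) p
     = c1 * complex_of_real (py a p) + c2 * complex_of_real (py b p)"
proof -
  have L: "bounded_linear (\<lambda>x. c * complex_of_real x)" for c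
    by (rule bounded_linear_compose[OF bounded_linear_mult_right bounded_linear_of_real])
  show ?thesis
    using py_add[OF bl_diff[OF L assms(1)] bl_diff[OF L assms(2)]] bl_py[OF L assms(1)] bl_py[OF L assms(2)]
    by simp
qed

theorem lemma1:
  fixes \<Omega> :: "(real \<times> real) set"
    and r :: "real \<times> real \<Rightarrow> complex^3"
    and v \<beta> f g :: "real \<times> real \<Rightarrow> real"
  assumes dom: "open \<Omega>" "connected \<Omega>"
    and r_smooth: "smooth_on \<Omega> r"
    and r_sphere: "\<forall>p\<in>\<Omega>. norm (r p) = 1"
    and horiz: "\<forall>p\<in>\<Omega>. herm (r p) (px r p) = 0 \<and> herm (r p) (py r p) = 0
                       \<and> herm (px r p) (py r p) = 0"
    and conf: "\<forall>p\<in>\<Omega>. norm (px r p) = exp (v p) \<and> norm (py r p) = exp (v p)"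
    and v_smooth: "smooth_on \<Omega> v"
    and \<beta>_smooth: "smooth_on \<Omega> \<beta>"
    and SU: "\<forall>p\<in>\<Omega>. SU3 (vector [exp (\<i> * complex_of_real (\<beta> p)) *s r p,
                                   exp (- v p) *\<^sub>R px r p,
                                   exp (- v p) *\<^sub>R py r p])"
    and f_def: "\<forall>p\<in>\<Omega>. \<i> * complex_of_real (f p)
                  = herm (px (\<lambda>q. exp (- v q) *\<^sub>R py r q) p) (exp (- v p) *\<^sub>R py r p)"
    and g_def: "\<forall>p\<in>\<Omega>. \<i> * complex_of_real (g p)
                  = herm (py (\<lambda>q. exp (- v q) *\<^sub>R px r q) p) (exp (- v p) *\<^sub>R px r p)"
  shows "\<forall>p\<in>\<Omega>.
     py (\<lambda>q. f q * exp (2 * v q)) p + px (\<lambda>q. g q * exp (2 * v q)) p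
       + exp (2 * v p) * px (py \<beta>) p = 0
   \<and> py (\<lambda>q. g q * exp (2 * v q)) p + py v p * exp (2 * v p) * py \<beta> p
       = px (\<lambda>q. f q * exp (2 * v q)) p + px v p * exp (2 * v p) * px \<beta> p
   \<and> px (px v) p + py (py v) p + exp (2 * v p)
       - 2 * ((f p * exp (2 * v p))\<^sup>2 + (g p * exp (2 * v p))\<^sup>2) * exp (- 4 * v p)
       - (px \<beta> p * (f p * exp (2 * v p)) + py \<beta> p * (g p * exp (2 * v p))) * exp (- 2 * v p) = 0"
proof
  fix p assume pO: "p \<in> \<Omega>"
  note O = dom(1)
  have Dr: "pd bs r differentiable (at q)" if "q \<in> \<Omega>" for bs q using smooth_pd[OF r_smooth that O] .
  have Dv: "pd bs v differentiable (at q)" if "q \<in> \<Omega>" for bs q using smooth_pd[OF v_smooth that O] .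
  have Db: "pd bs \<beta> differentiable (at q)" if "q \<in> \<Omega>" for bs q using smooth_pd[OF \<beta>_smooth that O] .
  have r0: "r differentiable (at q)" and r1: "px r differentiable (at q)" and r2: "py r differentiable (at q)"
    and r11: "px (px r) differentiable (at q)" and r21: "py (px r) differentiable (at q)"
    and r12: "px (py r) differentiable (at q)" and r22: "py (py r) differentiable (at q)"
    and r211: "py (px (px r)) differentiable (at q)" and r121: "px (py (px r)) differentiable (at q)"
    if "q \<in> \<Omega>" for q
    using Dr[OF that, of "[]"] Dr[OF that, of "[True]"] Dr[OF that, of "[False]"]
      Dr[OF that, of "[True,True]"] Dr[OF that, of "[False,True]"] Dr[OF that, of "[True,False]"]
      Dr[OF that, of "[False,False]"] Dr[OF that, of "[False,True,True]"] Dr[OF that, of "[True,False,True]"]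
    by simp_all
  have v0: "v differentiable (at q)" and v1: "px v differentiable (at q)" and v2: "py v differentiable (at q)"
    and v11: "px (px v) differentiable (at q)" and v21: "py (px v) differentiable (at q)"
    and v12: "px (py v) differentiable (at q)" and v22: "py (py v) differentiable (at q)"
    if "q \<in> \<Omega>" for q
    using Dv[OF that, of "[]"] Dv[OF that, of "[True]"] Dv[OF that, of "[False]"]
      Dv[OF that, of "[True,True]"] Dv[OF that, of "[False,True]"] Dv[OF that, of "[True,False]"]
      Dv[OF that, of "[False,False]"]
    by simp_all
  have b0: "\<beta> differentiable (at q)" and b1: "px \<beta> differentiable (at q)" and b2: "py \<beta> differentiable (at q)"
    and b21: "py (px \<beta>) differentiable (at q)" and b12: "px (py \<beta>) differentiable (at q)"
    if "q \<in> \<Omega>" for q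
    using Db[OF that, of "[]"] Db[OF that, of "[True]"] Db[OF that, of "[False]"]
      Db[OF that, of "[False,True]"] Db[OF that, of "[True,False]"]
    by simp_all
  have Sr: "px (py r) q = py (px r) q" if "q \<in> \<Omega>" for q
    using schwarz_vec[OF O that] r0 r1 r2 r21 r12 by metis
  have Sr1: "px (py (px r)) q = py (px (px r)) q" if "q \<in> \<Omega>" for q
    using schwarz_vec[OF O that, of "px r"] r1 r11 r21 r211 r121 by metis
  have Sv: "px (py v) q = py (px v) q" if "q \<in> \<Omega>" for q
    using schwarz_realf[OF O that] v0 v1 v2 v21 v12 by metis
  have Sb: "px (py \<beta>) q = py (px \<beta>) q" if "q \<in> \<Omega>" for q
    using schwarz_realf[OF O that] b0 b1 b2 b21 b12 by metis
  define e0 where "e0 = (\<lambda>q. exp (\<i> * complex_of_real (\<beta> q)) *s r q)"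
  define e1 where "e1 = (\<lambda>q. exp (- v q) *\<^sub>R px r q)"
  define e2 where "e2 = (\<lambda>q. exp (- v q) *\<^sub>R py r q)"
  have ex: "(\<lambda>q. exp (- v q)) differentiable (at q)" if "q \<in> \<Omega>" for q
    using v0[OF that] by (intro Dintros)
  have eb: "(\<lambda>q. exp (\<i> * complex_of_real (\<beta> q))) differentiable (at q)" if "q \<in> \<Omega>" for q
    using b0[OF that] by (intro Dintros)
  have de0: "e0 differentiable (at q)" and de1: "e1 differentiable (at q)" and de2: "e2 differentiable (at q)"
    if "q \<in> \<Omega>" for q
    unfolding e0_def e1_def e2_def
    by (rule diff_smult[OF eb[OF that] r0[OF that]], rule differentiable_scaleR[OF ex[OF that] r1[OF that]],
        rule differentiable_scaleR[OF ex[OF that] r2[OF that]])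
  have pexv: "px (\<lambda>q. exp (- v q)) q = - exp (- v q) * px v q" and pyexv: "py (\<lambda>q. exp (- v q)) q = - exp (- v q) * py v q"
    if "q \<in> \<Omega>" for q
    using px_exp[OF differentiable_minus[OF v0[OF that]]] px_minus[OF v0[OF that]]
      py_exp[OF differentiable_minus[OF v0[OF that]]] py_minus[OF v0[OF that]] by simp_all
  have dib: "(\<lambda>q. \<i> * complex_of_real (\<beta> q)) differentiable (at q)" if "q \<in> \<Omega>" for q
    using b0[OF that] by (intro Dintros)
  have pxib: "px (\<lambda>q. \<i> * complex_of_real (\<beta> q)) q = \<i> * complex_of_real (px \<beta> q)"
   and pyib: "py (\<lambda>q. \<i> * complex_of_real (\<beta> q)) q = \<i> * complex_of_real (py \<beta> q)" if "q \<in> \<Omega>" for q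
    using px_mult[OF differentiable_const diff_ofreal[OF b0[OF that]], of \<i>] px_ofreal[OF b0[OF that]]
      py_mult[OF differentiable_const diff_ofreal[OF b0[OF that]], of \<i>] py_ofreal[OF b0[OF that]]
    by (simp_all add: px_const py_const)
  have E0x: "px e0 q = (\<i> * complex_of_real (px \<beta> q)) *s e0 q + exp (\<i> * complex_of_real (\<beta> q)) *s px r q"
   and E0y: "py e0 q = (\<i> * complex_of_real (py \<beta> q)) *s e0 q + exp (\<i> * complex_of_real (\<beta> q)) *s py r q"
    if "q \<in> \<Omega>" for q
    using px_smult[OF eb[OF that] r0[OF that]] py_smult[OF eb[OF that] r0[OF that]]
      px_exp[OF dib[OF that]] py_exp[OF dib[OF that]] pxib[OF that] pyib[OF that]
    by (simp_all add: e0_def vector_smult_assoc mult.commute)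
  have E1x: "px e1 q = - px v q *\<^sub>R e1 q + exp (- v q) *\<^sub>R px (px r) q"
   and E1y: "py e1 q = - py v q *\<^sub>R e1 q + exp (- v q) *\<^sub>R py (px r) q"
   and E2x: "px e2 q = - px v q *\<^sub>R e2 q + exp (- v q) *\<^sub>R px (py r) q"
   and E2y: "py e2 q = - py v q *\<^sub>R e2 q + exp (- v q) *\<^sub>R py (py r) q"
    if "q \<in> \<Omega>" for q
    using px_scaleR[OF ex[OF that] r1[OF that]] py_scaleR[OF ex[OF that] r1[OF that]]
      px_scaleR[OF ex[OF that] r2[OF that]] py_scaleR[OF ex[OF that] r2[OF that]]
      pexv[OF that] pyexv[OF that]
    by (simp_all add: e1_def e2_def)
  have SUq: "SU3 (vector [e0 q, e1 q, e2 q])" if "q \<in> \<Omega>" for q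
    using SU that unfolding e0_def e1_def e2_def by blast
  have UU: "vector [e0 q, e1 q, e2 q] ** cnj_transpose (vector [e0 q, e1 q, e2 q]) = mat 1"
   and det1: "Det3 (e0 q) (e1 q) (e2 q) = 1" if "q \<in> \<Omega>" for q
    using SUq[OF that] unfolding SU3_def det_Det3 by simp_all
  have orth: "herm (e0 q) (e0 q) = 1" "herm (e1 q) (e1 q) = 1" "herm (e2 q) (e2 q) = 1"
    "herm (e0 q) (e1 q) = 0" "herm (e0 q) (e2 q) = 0" "herm (e1 q) (e2 q) = 0"
    "herm (e1 q) (e0 q) = 0" "herm (e2 q) (e0 q) = 0" "herm (e2 q) (e1 q) = 0"
    if "q \<in> \<Omega>" for q
    using ortho[OF UU[OF that], of 1 1] ortho[OF UU[OF that], of 2 2] ortho[OF UU[OF that], of 3 3]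
      ortho[OF UU[OF that], of 1 2] ortho[OF UU[OF that], of 1 3] ortho[OF UU[OF that], of 2 3]
      ortho[OF UU[OF that], of 2 1] ortho[OF UU[OF that], of 3 1] ortho[OF UU[OF that], of 3 2]
    by simp_all
  have pars: "herm u w = herm u (e0 q) * cnj (herm w (e0 q)) + herm u (e1 q) * cnj (herm w (e1 q))
      + herm u (e2 q) * cnj (herm w (e2 q))" if "q \<in> \<Omega>" for q u w
    using parseval[OF UU[OF that], of u w] by (simp add: sum_3)
  have expd: "w = herm w (e0 q) *s e0 q + herm w (e1 q) *s e1 q + herm w (e2 q) *s e2 q" if "q \<in> \<Omega>" for q w
    using expand[OF UU[OF that], of w] by (simp add: sum_3)
  have nrx: "herm (px r q) (px r q) = complex_of_real ((exp (v q))\<^sup>2)"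
   and nry: "herm (py r q) (py r q) = complex_of_real ((exp (v q))\<^sup>2)" if "q \<in> \<Omega>" for q
    using conf that by (simp_all add: herm_self)
  have hz: "herm (r q) (px r q) = 0" "herm (r q) (py r q) = 0" "herm (px r q) (py r q) = 0"
     "herm (px r q) (r q) = 0" "herm (py r q) (r q) = 0" "herm (py r q) (px r q) = 0" if "q \<in> \<Omega>" for q
    using horiz that herm_cnj by (metis complex_cnj_zero)+
  have Fq: "\<i> * complex_of_real (f q) = herm (px e2 q) (e2 q)"
   and Gq: "\<i> * complex_of_real (g q) = herm (py e1 q) (e1 q)" if "q \<in> \<Omega>" for q
    using f_def g_def that by (simp_all add: e1_def e2_def)
  have expv: "exp (- v q) * (exp (v q))\<^sup>2 = exp (v q)" for q
    by (simp add: exp_minus field_simps power2_eq_square)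
  have expvc: "complex_of_real (exp (- v q)) * (complex_of_real (exp (v q)))\<^sup>2 = complex_of_real (exp (v q))" for q
    by (metis expv of_real_mult of_real_power)
  have hre: "herm (px r q) (e0 q) = 0" "herm (py r q) (e0 q) = 0"
    "herm (px r q) (e1 q) = complex_of_real (exp (v q))" "herm (px r q) (e2 q) = 0"
    "herm (py r q) (e1 q) = 0" "herm (py r q) (e2 q) = complex_of_real (exp (v q))" if "q \<in> \<Omega>" for q
    using hz[OF that] nrx[OF that] nry[OF that] expvc[of q]
    by (simp_all add: e0_def e1_def e2_def herm_smult_right herm_scaleR_right)
  have A0: "herm (px e0 q) (e0 q) = \<i> * complex_of_real (px \<beta> q)"
    "herm (px e0 q) (e1 q) = exp (\<i> * complex_of_real (\<beta> q)) * complex_of_real (exp (v q))"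
    "herm (px e0 q) (e2 q) = 0"
   and B0: "herm (py e0 q) (e0 q) = \<i> * complex_of_real (py \<beta> q)"
    "herm (py e0 q) (e1 q) = 0"
    "herm (py e0 q) (e2 q) = exp (\<i> * complex_of_real (\<beta> q)) * complex_of_real (exp (v q))"
    if "q \<in> \<Omega>" for q
    using orth[OF that] hre[OF that]
    by (simp_all add: E0x[OF that] E0y[OF that] herm_add_left herm_smult_left)
  have tr_x: "herm (px e0 q) (e0 q) + herm (px e1 q) (e1 q) + herm (px e2 q) (e2 q) = 0"
   and tr_y: "herm (py e0 q) (e0 q) + herm (py e1 q) (e1 q) + herm (py e2 q) (e2 q) = 0" if "q \<in> \<Omega>" for q
  proof -
    have c: "px (\<lambda>q. Det3 (e0 q) (e1 q) (e2 q)) q = 0" "py (\<lambda>q. Det3 (e0 q) (e1 q) (e2 q)) q = 0"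
      using px_const_on[OF O that det1] py_const_on[OF O that det1] by simp_all
    have d: "Det3 w (e1 q) (e2 q) = herm w (e0 q)" "Det3 (e0 q) w (e2 q) = herm w (e1 q)"
       "Det3 (e0 q) (e1 q) w = herm w (e2 q)" for w
      using arg_cong[OF expd[OF that, of w], of "\<lambda>w. Det3 w (e1 q) (e2 q)"]
        arg_cong[OF expd[OF that, of w], of "\<lambda>w. Det3 (e0 q) w (e2 q)"]
        arg_cong[OF expd[OF that, of w], of "\<lambda>w. Det3 (e0 q) (e1 q) w"]
      by (simp_all only: Det3_lin1 Det3_lin2 Det3_lin3 det1[OF that] mult_1_right)
    show "herm (px e0 q) (e0 q) + herm (px e1 q) (e1 q) + herm (px e2 q) (e2 q) = 0"
      using c(1) px_Det3[OF de0[OF that] de1[OF that] de2[OF that]] d by simp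
    show "herm (py e0 q) (e0 q) + herm (py e1 q) (e1 q) + herm (py e2 q) (e2 q) = 0"
      using c(2) py_Det3[OF de0[OF that] de1[OF that] de2[OF that]] d by simp
  qed
  have he1: "herm w (e1 q) = complex_of_real (exp (- v q)) * herm w (px r q)"
   and he2: "herm w (e2 q) = complex_of_real (exp (- v q)) * herm w (py r q)" for w q
    by (simp_all add: e1_def e2_def herm_scaleR_right)
  have lin3: "b = - a - c" if "a + b + c = 0" for a b c :: complex
  proof -
    have "b = (a + b + c) - a - c" by simp
    then show ?thesis using that by simp
  qed
  have T1: "herm (px e1 q) (e1 q) = - \<i> * complex_of_real (px \<beta> q) - \<i> * complex_of_real (f q)"
   and T2: "herm (py e2 q) (e2 q) = - \<i> * complex_of_real (py \<beta> q) - \<i> * complex_of_real (g q)"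
    if "q \<in> \<Omega>" for q
  proof -
    have "herm (px e1 q) (e1 q) = - herm (px e0 q) (e0 q) - herm (px e2 q) (e2 q)"
      using lin3[OF tr_x[OF that]] .
    then show "herm (px e1 q) (e1 q) = - \<i> * complex_of_real (px \<beta> q) - \<i> * complex_of_real (f q)"
      unfolding A0(1)[OF that] Fq[OF that, symmetric] by simp
    have "herm (py e2 q) (e2 q) = - herm (py e0 q) (e0 q) - herm (py e1 q) (e1 q)"
      using lin3[of "herm (py e0 q) (e0 q) + herm (py e1 q) (e1 q)" "herm (py e2 q) (e2 q)" 0] tr_y[OF that] by simp
    then show "herm (py e2 q) (e2 q) = - \<i> * complex_of_real (py \<beta> q) - \<i> * complex_of_real (g q)"
      unfolding B0(1)[OF that] Gq[OF that, symmetric] by simp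
  qed
  have C1: "herm (px e1 q) (e2 q) = - complex_of_real (py v q) + \<i> * complex_of_real (g q)"
   and C2: "herm (py e1 q) (e2 q) = complex_of_real (px v q) + \<i> * complex_of_real (f q)"
    if "q \<in> \<Omega>" for q
  proof -
    have h1: "herm (px (px r) q) (py r q) = - cnj (herm (py (px r) q) (px r q))"
      using antiherm_x[OF O that r1[OF that] r2[OF that], of 0] hz(3) Sr[OF that] by simp
    define X where "X = complex_of_real (exp (- v q))"
    have g1: "\<i> * complex_of_real (g q) = - complex_of_real (py v q) + X * X * herm (py (px r) q) (px r q)"
      using Gq[OF that] unfolding E1y[OF that]
      by (simp only: herm_add_left herm_scaleR_left orth(2)[OF that] he1[of "py (px r) q"] X_def) (simp add: algebra_simps)
    have c1: "herm (px e1 q) (e2 q) = X * X * herm (px (px r) q) (py r q)"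
      unfolding E1x[OF that]
      by (simp only: herm_add_left herm_scaleR_left orth(6)[OF that] he2[of "px (px r) q"] X_def) (simp add: algebra_simps)
    have Xr: "cnj X = X" by (simp add: X_def)
    have "herm (px e1 q) (e2 q) = - cnj (X * X * herm (py (px r) q) (px r q))"
      using c1 h1 Xr by simp
    also have "\<dots> = - cnj (\<i> * complex_of_real (g q) + complex_of_real (py v q))"
      using g1 by (simp add: algebra_simps)
    finally show "herm (px e1 q) (e2 q) = - complex_of_real (py v q) + \<i> * complex_of_real (g q)"
      by simp
    have f1: "\<i> * complex_of_real (f q) = - complex_of_real (px v q) + X * X * herm (py (px r) q) (py r q)"
      using Fq[OF that] unfolding E2x[OF that] Sr[OF that]
      by (simp only: herm_add_left herm_scaleR_left orth(3)[OF that] he2[of "py (px r) q"] X_def) (simp add: algebra_simps)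
    have c2: "herm (py e1 q) (e2 q) = X * X * herm (py (px r) q) (py r q)"
      unfolding E1y[OF that]
      by (simp only: herm_add_left herm_scaleR_left orth(6)[OF that] he2[of "py (px r) q"] X_def) (simp add: algebra_simps)
    show "herm (py e1 q) (e2 q) = complex_of_real (px v q) + \<i> * complex_of_real (f q)"
      using c2 f1 by (simp add: algebra_simps)
  qed
  have dpe1x: "px e1 differentiable (at q)" and dpe1y: "py e1 differentiable (at q)"
   and dpe2x: "px e2 differentiable (at q)" and dpe2y: "py e2 differentiable (at q)" if "q \<in> \<Omega>" for q
  proof -
    have G: "(\<lambda>q. - px v q *\<^sub>R e1 q + exp (- v q) *\<^sub>R px (px r) q) differentiable (at q)"
      using v1[OF that] de1[OF that] ex[OF that] r11[OF that] by simp
    show "px e1 differentiable (at q)" by (rule diff_local[OF O that _ G], rule E1x)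
    have G: "(\<lambda>q. - py v q *\<^sub>R e1 q + exp (- v q) *\<^sub>R py (px r) q) differentiable (at q)"
      using v2[OF that] de1[OF that] ex[OF that] r21[OF that] by simp
    show "py e1 differentiable (at q)" by (rule diff_local[OF O that _ G], rule E1y)
    have G: "(\<lambda>q. - px v q *\<^sub>R e2 q + exp (- v q) *\<^sub>R px (py r) q) differentiable (at q)"
      using v1[OF that] de2[OF that] ex[OF that] r12[OF that] by simp
    show "px e2 differentiable (at q)" by (rule diff_local[OF O that _ G], rule E2x)
    have G: "(\<lambda>q. - py v q *\<^sub>R e2 q + exp (- v q) *\<^sub>R py (py r) q) differentiable (at q)"
      using v2[OF that] de2[OF that] ex[OF that] r22[OF that] by simp
    show "py e2 differentiable (at q)" by (rule diff_local[OF O that _ G], rule E2y)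
  qed
  have fIm: "f q = Im (herm (px e2 q) (e2 q))" and gIm: "g q = Im (herm (py e1 q) (e1 q))" if "q \<in> \<Omega>" for q
    using arg_cong[OF Fq[OF that], of Im] arg_cong[OF Gq[OF that], of Im] by simp_all
  have df: "f differentiable (at p)" and dg: "g differentiable (at p)"
    using diff_local[OF O pO fIm diff_Im[OF diff_herm[OF dpe2x[OF pO] de2[OF pO]]]]
      diff_local[OF O pO gIm diff_Im[OF diff_herm[OF dpe1y[OF pO] de1[OF pO]]]] by blast+
  have Se1: "py (px e1) p = px (py e1) p"
  proof -
    have "py (px e1) p = py (\<lambda>q. - px v q *\<^sub>R e1 q + exp (- v q) *\<^sub>R px (px r) q) p"
      apply (rule py_local[OF O pO])
       apply (rule E1x, assumption)
      using v1[OF pO] de1[OF pO] ex[OF pO] r11[OF pO] by simp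
    also have "\<dots> = - py (px v) p *\<^sub>R e1 p - px v p *\<^sub>R py e1 p
        - (exp (- v p) * py v p) *\<^sub>R px (px r) p + exp (- v p) *\<^sub>R py (px (px r)) p"
      using py_lin2[OF differentiable_minus[OF v1[OF pO]] de1[OF pO] ex[OF pO] r11[OF pO]]
      by (simp add: py_minus[OF v1[OF pO]] pyexv[OF pO])
    also have "\<dots> = - py (px v) p *\<^sub>R e1 p - px v p *\<^sub>R (- py v p *\<^sub>R e1 p + exp (- v p) *\<^sub>R py (px r) p)
        - (exp (- v p) * py v p) *\<^sub>R px (px r) p + exp (- v p) *\<^sub>R py (px (px r)) p"
      using E1y[OF pO] by simp
    finally have L: "py (px e1) p = \<dots>" .
    have "px (py e1) p = px (\<lambda>q. - py v q *\<^sub>R e1 q + exp (- v q) *\<^sub>R py (px r) q) p"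
      apply (rule px_local[OF O pO])
       apply (rule E1y, assumption)
      using v2[OF pO] de1[OF pO] ex[OF pO] r21[OF pO] by simp
    also have "\<dots> = - px (py v) p *\<^sub>R e1 p - py v p *\<^sub>R px e1 p
        - (exp (- v p) * px v p) *\<^sub>R py (px r) p + exp (- v p) *\<^sub>R px (py (px r)) p"
      using px_lin2[OF differentiable_minus[OF v2[OF pO]] de1[OF pO] ex[OF pO] r21[OF pO]]
      by (simp add: px_minus[OF v2[OF pO]] pexv[OF pO])
    also have "\<dots> = - px (py v) p *\<^sub>R e1 p - py v p *\<^sub>R (- px v p *\<^sub>R e1 p + exp (- v p) *\<^sub>R px (px r) p)
        - (exp (- v p) * px v p) *\<^sub>R py (px r) p + exp (- v p) *\<^sub>R px (py (px r)) p"
      using E1x[OF pO] by simp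
    finally have R: "px (py e1) p = \<dots>" .
    show ?thesis unfolding L R Sv[OF pO] Sr1[OF pO] by (simp add: algebra_simps)
  qed
  have cT1: "herm (px e1 q) (e1 q) = (- \<i>) * complex_of_real (px \<beta> q) + (- \<i>) * complex_of_real (f q)"
   and cT2: "herm (py e2 q) (e2 q) = (- \<i>) * complex_of_real (py \<beta> q) + (- \<i>) * complex_of_real (g q)"
   and cC1: "herm (px e1 q) (e2 q) = (- 1) * complex_of_real (py v q) + \<i> * complex_of_real (g q)"
   and cC2: "herm (py e1 q) (e2 q) = 1 * complex_of_real (px v q) + \<i> * complex_of_real (f q)"
   and cG: "herm (py e1 q) (e1 q) = 0 * complex_of_real (g q) + \<i> * complex_of_real (g q)"
    if "q \<in> \<Omega>" for q
    using T1[OF that] T2[OF that] C1[OF that] C2[OF that] Gq[OF that] by simp_all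
  have dfO: "f differentiable (at q)" and dgO: "g differentiable (at q)" if "q \<in> \<Omega>" for q
    using diff_local[OF O that fIm diff_Im[OF diff_herm[OF dpe2x[OF that] de2[OF that]]]]
      diff_local[OF O that gIm diff_Im[OF diff_herm[OF dpe1y[OF that] de1[OF that]]]] by blast+
  have L11: "herm (py (px e1) p) (e1 p) + herm (px e1 p) (py e1 p)
      = (- \<i>) * complex_of_real (py (px \<beta>) p) + (- \<i>) * complex_of_real (py f p)"
  proof -
    have "py (\<lambda>q. herm (px e1 q) (e1 q)) p = py (\<lambda>q. (- \<i>) * complex_of_real (px \<beta> q) + (- \<i>) * complex_of_real (f q)) p"
      apply (rule py_local[OF O pO]) apply (rule cT1, assumption)
      by (rule diff_cc[OF b1[OF pO] df])
    then show ?thesis using py_herm[OF dpe1x[OF pO] de1[OF pO]] py_cc[OF b1[OF pO] df] by metis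
  qed
  have M11: "herm (px (py e1) p) (e1 p) + herm (py e1 p) (px e1 p)
      = 0 * complex_of_real (px g p) + \<i> * complex_of_real (px g p)"
  proof -
    have "px (\<lambda>q. herm (py e1 q) (e1 q)) p = px (\<lambda>q. 0 * complex_of_real (g q) + \<i> * complex_of_real (g q)) p"
      apply (rule px_local[OF O pO]) apply (rule cG, assumption)
      by (rule diff_cc[OF dg dg])
    then show ?thesis using px_herm[OF dpe1y[OF pO] de1[OF pO]] px_cc[OF dg dg] by metis
  qed
  have L12: "herm (py (px e1) p) (e2 p) + herm (px e1 p) (py e2 p)
      = (- 1) * complex_of_real (py (py v) p) + \<i> * complex_of_real (py g p)"
  proof -
    have "py (\<lambda>q. herm (px e1 q) (e2 q)) p = py (\<lambda>q. (- 1) * complex_of_real (py v q) + \<i> * complex_of_real (g q)) p"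
      apply (rule py_local[OF O pO]) apply (rule cC1, assumption)
      by (rule diff_cc[OF v2[OF pO] dg])
    then show ?thesis using py_herm[OF dpe1x[OF pO] de2[OF pO]] py_cc[OF v2[OF pO] dg] by metis
  qed
  have M12: "herm (px (py e1) p) (e2 p) + herm (py e1 p) (px e2 p)
      = 1 * complex_of_real (px (px v) p) + \<i> * complex_of_real (px f p)"
  proof -
    have "px (\<lambda>q. herm (py e1 q) (e2 q)) p = px (\<lambda>q. 1 * complex_of_real (px v q) + \<i> * complex_of_real (f q)) p"
      apply (rule px_local[OF O pO]) apply (rule cC2, assumption)
      by (rule diff_cc[OF v1[OF pO] df])
    then show ?thesis using px_herm[OF dpe1y[OF pO] de2[OF pO]] px_cc[OF v1[OF pO] df] by metis
  qed
  have B10: "herm (py e1 p) (e0 p) = 0"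
    using antiherm_y[OF O pO de1[OF pO] de0[OF pO], of 0] orth(7) B0(2)[OF pO] by simp
  have A20: "herm (px e2 p) (e0 p) = 0"
    using antiherm_x[OF O pO de2[OF pO] de0[OF pO], of 0] orth(8) A0(3)[OF pO] by simp
  have A10: "herm (px e1 p) (e0 p) = - cnj (exp (\<i> * complex_of_real (\<beta> p)) * complex_of_real (exp (v p)))"
    using antiherm_x[OF O pO de1[OF pO] de0[OF pO], of 0] orth(7) A0(2)[OF pO] by simp
  have B20: "herm (py e2 p) (e0 p) = - cnj (exp (\<i> * complex_of_real (\<beta> p)) * complex_of_real (exp (v p)))"
    using antiherm_y[OF O pO de2[OF pO] de0[OF pO], of 0] orth(8) B0(3)[OF pO] by simp
  have A21: "herm (px e2 p) (e1 p) = - cnj (herm (px e1 p) (e2 p))"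
    using antiherm_x[OF O pO de2[OF pO] de1[OF pO], of 0] orth(9) by simp
  have B21: "herm (py e2 p) (e1 p) = - cnj (herm (py e1 p) (e2 p))"
    using antiherm_y[OF O pO de2[OF pO] de1[OF pO], of 0] orth(9) by simp
  have cc: "cnj (exp (\<i> * complex_of_real (\<beta> p))) * exp (\<i> * complex_of_real (\<beta> p)) = 1"
  proof -
    have "exp (\<i> * complex_of_real (\<beta> p)) * cnj (exp (\<i> * complex_of_real (\<beta> p))) = 1"
      unfolding complex_norm_square[symmetric] by (simp add: norm_exp_i_times)
    then show ?thesis by (simp add: mult.commute)
  qed
  have AB: "herm (px e1 p) (e0 p) * cnj (herm (py e2 p) (e0 p)) = complex_of_real ((exp (v p))\<^sup>2)"
  proof -
    have "herm (px e1 p) (e0 p) * cnj (herm (py e2 p) (e0 p))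
        = (cnj (exp (\<i> * complex_of_real (\<beta> p))) * exp (\<i> * complex_of_real (\<beta> p))) * (complex_of_real (exp (v p)) * complex_of_real (exp (v p)))"
      unfolding A10 B20 by (simp add: algebra_simps)
    also have "\<dots> = complex_of_real ((exp (v p))\<^sup>2)" unfolding cc by (simp add: power2_eq_square)
    finally show ?thesis .
  qed
  have Z11: "herm (px e1 p) (py e1 p) - cnj (herm (px e1 p) (py e1 p))
      = (- \<i>) * complex_of_real (py (px \<beta>) p) + (- \<i>) * complex_of_real (py f p)
        - (0 * complex_of_real (px g p) + \<i> * complex_of_real (px g p))"
  proof -
    have m: "herm (py (px e1) p) (e1 p) + cnj (herm (px e1 p) (py e1 p))
      = 0 * complex_of_real (px g p) + \<i> * complex_of_real (px g p)"
      using M11 unfolding Se1[symmetric] herm_cnj[of "py e1 p" "px e1 p"] .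
    have "herm (px e1 p) (py e1 p) - cnj (herm (px e1 p) (py e1 p))
      = (herm (py (px e1) p) (e1 p) + herm (px e1 p) (py e1 p)) - (herm (py (px e1) p) (e1 p) + cnj (herm (px e1 p) (py e1 p)))"
      by simp
    then show ?thesis unfolding L11 m .
  qed
  have P11: "herm (px e1 p) (py e1 p) = ((- \<i>) * complex_of_real (px \<beta> p) + (- \<i>) * complex_of_real (f p))
       * cnj (0 * complex_of_real (g p) + \<i> * complex_of_real (g p))
     + ((- 1) * complex_of_real (py v p) + \<i> * complex_of_real (g p)) * cnj (1 * complex_of_real (px v p) + \<i> * complex_of_real (f p))"
    using pars[OF pO, of "px e1 p" "py e1 p"] unfolding B10 cT1[OF pO] cG[OF pO] cC1[OF pO] cC2[OF pO] by simp
  have R1: "py (px \<beta>) p + py f p + px g p + 2 * (py v p * f p + g p * px v p) = 0"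
  proof -
    have "Im (herm (px e1 p) (py e1 p) - cnj (herm (px e1 p) (py e1 p))) = Im ((- \<i>) * complex_of_real (py (px \<beta>) p) + (- \<i>) * complex_of_real (py f p)
        - (0 * complex_of_real (px g p) + \<i> * complex_of_real (px g p)))" unfolding Z11 ..
    then show ?thesis unfolding P11 by (simp add: algebra_simps)
  qed
  have Z12: "herm (px e1 p) (py e2 p) - herm (py e1 p) (px e2 p)
      = (- 1) * complex_of_real (py (py v) p) + \<i> * complex_of_real (py g p)
        - (1 * complex_of_real (px (px v) p) + \<i> * complex_of_real (px f p))"
  proof -
    have m: "herm (py (px e1) p) (e2 p) + herm (py e1 p) (px e2 p)
      = 1 * complex_of_real (px (px v) p) + \<i> * complex_of_real (px f p)"
      using M12 unfolding Se1[symmetric] .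
    have "herm (px e1 p) (py e2 p) - herm (py e1 p) (px e2 p)
      = (herm (py (px e1) p) (e2 p) + herm (px e1 p) (py e2 p)) - (herm (py (px e1) p) (e2 p) + herm (py e1 p) (px e2 p))"
      by simp
    then show ?thesis unfolding L12 m .
  qed
  have P12a: "herm (px e1 p) (py e2 p) = complex_of_real ((exp (v p))\<^sup>2)
     + ((- \<i>) * complex_of_real (px \<beta> p) + (- \<i>) * complex_of_real (f p))
       * cnj (- cnj (1 * complex_of_real (px v p) + \<i> * complex_of_real (f p)))
     + ((- 1) * complex_of_real (py v p) + \<i> * complex_of_real (g p))
       * cnj ((- \<i>) * complex_of_real (py \<beta> p) + (- \<i>) * complex_of_real (g p))"
    using pars[OF pO, of "px e1 p" "py e2 p"] unfolding AB B21 cT1[OF pO] cT2[OF pO] cC1[OF pO] cC2[OF pO] .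
  have P12b: "herm (py e1 p) (px e2 p) =
       (0 * complex_of_real (g p) + \<i> * complex_of_real (g p))
       * cnj (- cnj ((- 1) * complex_of_real (py v p) + \<i> * complex_of_real (g p)))
     + (1 * complex_of_real (px v p) + \<i> * complex_of_real (f p)) * cnj (\<i> * complex_of_real (f p))"
    using pars[OF pO, of "py e1 p" "px e2 p"] unfolding B10 A21 Fq[OF pO, symmetric] cG[OF pO] cC1[OF pO] cC2[OF pO]
    by simp
  have R2: "py g p - px f p = px \<beta> p * px v p - py \<beta> p * py v p + 2 * f p * px v p - 2 * g p * py v p"
  proof -
    have "Im (herm (px e1 p) (py e2 p) - herm (py e1 p) (px e2 p)) = Im ((- 1) * complex_of_real (py (py v) p) + \<i> * complex_of_real (py g p)
        - (1 * complex_of_real (px (px v) p) + \<i> * complex_of_real (px f p)))" unfolding Z12 ..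
    then show ?thesis unfolding P12a P12b by (simp add: algebra_simps)
  qed
  have R3: "- py (py v) p - px (px v) p = (exp (v p))\<^sup>2 - px \<beta> p * f p - py \<beta> p * g p - 2 * ((f p)\<^sup>2 + (g p)\<^sup>2)"
  proof -
    have "Re (herm (px e1 p) (py e2 p) - herm (py e1 p) (px e2 p)) = Re ((- 1) * complex_of_real (py (py v) p) + \<i> * complex_of_real (py g p)
        - (1 * complex_of_real (px (px v) p) + \<i> * complex_of_real (px f p)))" unfolding Z12 ..
    then show ?thesis unfolding P12a P12b by (simp add: algebra_simps power2_eq_square)
  qed
  have d2v: "(\<lambda>q. 2 * v q) differentiable (at p)" using v0[OF pO] by simp
  have de2v: "(\<lambda>q. exp (2 * v q)) differentiable (at p)" by (rule diff_exp[OF d2v])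
  have px2v: "px (\<lambda>q. 2 * v q) p = 2 * px v p" and py2v: "py (\<lambda>q. 2 * v q) p = 2 * py v p"
    using px_mult[OF differentiable_const v0[OF pO], of 2] py_mult[OF differentiable_const v0[OF pO], of 2]
    by (simp_all add: px_const py_const)
  have Xf: "px (\<lambda>q. f q * exp (2 * v q)) p = px f p * exp (2 * v p) + f p * (exp (2 * v p) * (2 * px v p))"
   and Yf: "py (\<lambda>q. f q * exp (2 * v q)) p = py f p * exp (2 * v p) + f p * (exp (2 * v p) * (2 * py v p))"
   and Xg: "px (\<lambda>q. g q * exp (2 * v q)) p = px g p * exp (2 * v p) + g p * (exp (2 * v p) * (2 * px v p))"
   and Yg: "py (\<lambda>q. g q * exp (2 * v q)) p = py g p * exp (2 * v p) + g p * (exp (2 * v p) * (2 * py v p))"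
    using px_mult[OF df de2v] py_mult[OF df de2v] px_mult[OF dg de2v] py_mult[OF dg de2v]
      px_exp[OF d2v] py_exp[OF d2v] px2v py2v by simp_all
  have ex2: "exp (2 * v p) = exp (v p) * exp (v p)" by (simp flip: exp_add)
  have ex4: "exp (- 4 * v p) = inverse (exp (v p) ^ 4)"
    by (metis exp_minus exp_of_nat_mult mult_minus_left of_nat_numeral)
  have ex2': "exp (- 2 * v p) = inverse (exp (v p) ^ 2)"
    by (metis exp_minus exp_of_nat_mult mult_minus_left of_nat_numeral)
  have Epos: "exp (v p) \<noteq> 0" by simp
  have G1: "py (\<lambda>q. f q * exp (2 * v q)) p + px (\<lambda>q. g q * exp (2 * v q)) p
       + exp (2 * v p) * px (py \<beta>) p = 0"
  proof -
    have "py (\<lambda>q. f q * exp (2 * v q)) p + px (\<lambda>q. g q * exp (2 * v q)) p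
       + exp (2 * v p) * px (py \<beta>) p
       = exp (2 * v p) * (py (px \<beta>) p + py f p + px g p + 2 * (py v p * f p + g p * px v p))"
      unfolding Yf Xg Sb[OF pO] by (simp add: algebra_simps)
    then show ?thesis using R1 by simp
  qed
  have G2: "py (\<lambda>q. g q * exp (2 * v q)) p + py v p * exp (2 * v p) * py \<beta> p
       = px (\<lambda>q. f q * exp (2 * v q)) p + px v p * exp (2 * v p) * px \<beta> p"
  proof -
    have "py (\<lambda>q. g q * exp (2 * v q)) p + py v p * exp (2 * v p) * py \<beta> p
       - (px (\<lambda>q. f q * exp (2 * v q)) p + px v p * exp (2 * v p) * px \<beta> p)
       = exp (2 * v p) * ((py g p - px f p) - (px \<beta> p * px v p - py \<beta> p * py v p + 2 * f p * px v p - 2 * g p * py v p))"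
      unfolding Yg Xf by (simp add: algebra_simps)
    then show ?thesis using R2 by simp
  qed
  have G3: "px (px v) p + py (py v) p + exp (2 * v p)
       - 2 * ((f p * exp (2 * v p))\<^sup>2 + (g p * exp (2 * v p))\<^sup>2) * exp (- 4 * v p)
       - (px \<beta> p * (f p * exp (2 * v p)) + py \<beta> p * (g p * exp (2 * v p))) * exp (- 2 * v p) = 0"
  proof -
    have "px (px v) p + py (py v) p + exp (2 * v p)
       - 2 * ((f p * exp (2 * v p))\<^sup>2 + (g p * exp (2 * v p))\<^sup>2) * exp (- 4 * v p)
       - (px \<beta> p * (f p * exp (2 * v p)) + py \<beta> p * (g p * exp (2 * v p))) * exp (- 2 * v p)
       = px (px v) p + py (py v) p + (exp (v p))\<^sup>2 - 2 * ((f p)\<^sup>2 + (g p)\<^sup>2) - (px \<beta> p * f p + py \<beta> p * g p)"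
      unfolding ex2 ex4 ex2' using Epos by (simp add: field_simps power2_eq_square power4_eq_xxxx)
    then show ?thesis using R3 by simp
  qed
  show "py (\<lambda>q. f q * exp (2 * v q)) p + px (\<lambda>q. g q * exp (2 * v q)) p
       + exp (2 * v p) * px (py \<beta>) p = 0
   \<and> py (\<lambda>q. g q * exp (2 * v q)) p + py v p * exp (2 * v p) * py \<beta> p
       = px (\<lambda>q. f q * exp (2 * v q)) p + px v p * exp (2 * v p) * px \<beta> p
   \<and> px (px v) p + py (py v) p + exp (2 * v p)
       - 2 * ((f p * exp (2 * v p))\<^sup>2 + (g p * exp (2 * v p))\<^sup>2) * exp (- 4 * v p)
       - (px \<beta> p * (f p * exp (2 * v p)) + py \<beta> p * (g p * exp (2 * v p))) * exp (- 2 * v p) = 0"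
    using G1 G2 G3 by blast
qed

end
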